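(* Let $r = pq$ with integers $p, q > 1$, and let $M$ be an $r \times r$ binary circulant matrix (over $\mathbb{F}_2$) with first row $\mathbf{c} = (c_0, c_1, \ldots, c_{r-1})$. Let $k$ be an integer. (1) If $c_{(k+pi) \bmod r} = 1$ for $i = 0, 1, \ldots, q-1$ and all other entries of $\mathbf{c}$ are $0$, then $\operatorname{rank}(M) = p$. (2) If $c_{(k+i) \bmod r} = 1$ for $i = 0, 1, \ldots, p-1$ and all other entries of $\mathbf{c}$ are $0$, then $\operatorname{rank}(M) = r - p + 1$. Here rank is taken over $\mathbb{F}_2$.
   Context: An $r\times r$ circulant matrix is one in which each row is the cyclic right shift by one position of the row above it; it is determined by its first row. *)

theory Defs
  imports "HOL-Library.Z2" "Jordan_Normal_Form.DL_Rank"
begin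

definition circulant :: "nat \<Rightarrow> (nat \<Rightarrow> bit) \<Rightarrow> bit mat" where
  "circulant r c = mat r r (\<lambda>(i, j). c ((j + r - i) mod r))"

definition rank2 :: "nat \<Rightarrow> bit mat \<Rightarrow> nat" where
  "rank2 r M = vec_space.rank r M"

end

theory Submission
  imports Defs
begin


context vec_space begin
lemma rank_via_basis:
  assumes A: "A \<in> carrier_mat n nc"
    and S: "S \<subseteq> carrier_vec n" "finite S" "lin_indpt S"
    and sub1: "S \<subseteq> span (set (cols A))"
    and sub2: "set (cols A) \<subseteq> span S"
  shows "rank A = card S"
proof -
  have C: "set (cols A) \<subseteq> carrier_vec n" using cols_dim A by blast
  have "span (set (cols A)) \<subseteq> span S"
    by (rule span_is_subset[OF sub2 span_is_submodule[OF S(1)]])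
  moreover have "span S \<subseteq> span (set (cols A))"
    by (rule span_is_subset[OF sub1 span_is_submodule[OF C]])
  ultimately have eq: "span (set (cols A)) = span S" by blast
  have "maximal S (\<lambda>T. T \<subseteq> S \<and> lin_indpt T)"
    unfolding maximal_def using S by blast
  from dim_span[OF S(1) S(2) this] show ?thesis unfolding rank_def eq .
qed

lemma span_zero_mem: "S \<subseteq> carrier_vec n \<Longrightarrow> 0\<^sub>v n \<in> span S"
proof -
  assume "S \<subseteq> carrier_vec n"
  have "lincomb (\<lambda>_. 0) {} = 0\<^sub>v n" by (simp add: lincomb_def)
  thus ?thesis unfolding span_def by force
qed
end


lemma mod_win: "(r::int) > 0 \<Longrightarrow> -r \<le> x \<Longrightarrow> x < r \<Longrightarrow> x mod r = (if x < 0 then x + r else x)"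
proof (cases "x < 0")
  case True
  assume "r > 0" "-r \<le> x" "x < r"
  hence "x mod r = (x + r) mod r" by simp
  also have "\<dots> = x + r" using True \<open>-r \<le> x\<close> by (intro mod_pos_pos_trivial) auto
  finally show ?thesis using True by simp
qed auto

lemma arith1:
  fixes i j k :: int and p q :: nat
  assumes "p > 0" "q > 0"
  shows "(\<exists>t<q. (j - i) mod (int p * int q) = (k + int p * int t) mod (int p * int q))
     \<longleftrightarrow> i mod int p = (j - k) mod int p"
proof
  assume "\<exists>t<q. (j - i) mod (int p * int q) = (k + int p * int t) mod (int p * int q)"
  then obtain t where "(j - i) mod (int p * int q) = (k + int p * int t) mod (int p * int q)" by blast
  hence "int p * int q dvd (j - i) - (k + int p * int t)" by (simp add: mod_eq_dvd_iff)
  hence "int p dvd (j - i) - (k + int p * int t)" by (meson dvd_mult_left)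
  moreover have "i - (j - k) = - (((j - i) - (k + int p * int t)) + int p * int t)" by simp
  ultimately have "int p dvd i - (j - k)"
    by (metis dvd_add dvd_minus_iff dvd_triv_left)
  thus "i mod int p = (j - k) mod int p" by (simp add: mod_eq_dvd_iff)
next
  assume "i mod int p = (j - k) mod int p"
  hence "int p dvd i - (j - k)" by (simp add: mod_eq_dvd_iff)
  then obtain m0 where m0: "i - (j - k) = int p * m0" by (auto elim: dvdE)
  define m where "m = - m0"
  have m: "j - k - i = int p * m" using m0 unfolding m_def by (simp add: algebra_simps)
  define t where "t = nat (m mod int q)"
  have t: "int t = m mod int q" using assms by (simp add: t_def)
  have "m mod int q < int q" using assms by simp
  hence tq: "t < q" using t by linarith
  have "(j - i) - (k + int p * int t) = (j - k - i) - int p * int t" by simp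
  also have "\<dots> = int p * m - int p * (m mod int q)" using m t by simp
  also have "\<dots> = int p * (m - m mod int q)" by (simp add: right_diff_distrib)
  also have "\<dots> = int p * int q * (m div int q)"
    by (simp add: minus_mod_eq_mult_div)
  finally have "int p * int q dvd (j - i) - (k + int p * int t)" by simp
  hence "(j - i) mod (int p * int q) = (k + int p * int t) mod (int p * int q)"
    by (simp add: mod_eq_dvd_iff)
  thus "\<exists>t<q. (j - i) mod (int p * int q) = (k + int p * int t) mod (int p * int q)"
    using tq by blast
qed

lemma arith2:
  fixes i j k :: int and p r :: nat
  assumes "0 < p" "p \<le> r"
  shows "(\<exists>t<p. (j - i) mod int r = (k + int t) mod int r)
     \<longleftrightarrow> (i - (j - k - int p + 1)) mod int r < int p"
proof
  assume "\<exists>t<p. (j - i) mod int r = (k + int t) mod int r"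
  then obtain t where t: "t < p" "(j - i) mod int r = (k + int t) mod int r" by blast
  hence "int r dvd (j - i) - (k + int t)" by (simp add: mod_eq_dvd_iff)
  moreover have "(i - (j - k - int p + 1)) - (int p - 1 - int t) = - ((j - i) - (k + int t))" by simp
  ultimately have "int r dvd (i - (j - k - int p + 1)) - (int p - 1 - int t)"
    by (metis dvd_minus_iff)
  hence "(i - (j - k - int p + 1)) mod int r = (int p - 1 - int t) mod int r"
    by (simp add: mod_eq_dvd_iff)
  also have "\<dots> = int p - 1 - int t" using t assms by (intro mod_pos_pos_trivial) auto
  finally show "(i - (j - k - int p + 1)) mod int r < int p" by simp
next
  assume u: "(i - (j - k - int p + 1)) mod int r < int p"
  define u where "u = (i - (j - k - int p + 1)) mod int r"
  have u0: "u \<ge> 0" using assms by (simp add: u_def)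
  define t where "t = nat (int p - 1 - u)"
  have tp: "t < p" using u0 assms by (simp add: t_def)
  have ti: "int t = int p - 1 - u" using u u_def by (simp add: t_def)
  have "int r dvd (i - (j - k - int p + 1)) - u" unfolding u_def
    by (simp add: mod_eq_dvd_iff)
  moreover have "(j - i) - (k + int t) = - ((i - (j - k - int p + 1)) - u)" unfolding ti by simp
  ultimately have "int r dvd (j - i) - (k + int t)"
    by (metis dvd_minus_iff)
  hence "(j - i) mod int r = (k + int t) mod int r" by (simp add: mod_eq_dvd_iff)
  thus "\<exists>t<p. (j - i) mod int r = (k + int t) mod int r" using tp by blast
qed



lemma col_circ: "i < r \<Longrightarrow> j < r \<Longrightarrow> col (circulant r c) j $ i = c ((j + r - i) mod r)"
  unfolding circulant_def by (simp add: col_def)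

lemma circ_carrier: "circulant r c \<in> carrier_mat r r"
  unfolding circulant_def by simp

lemma set_cols_circ: "set (cols (circulant r c)) = col (circulant r c) ` {0..<r}"
  unfolding cols_def circulant_def by simp

lemma cols_circ_carrier: "set (cols (circulant r c)) \<subseteq> carrier_vec r"
  using cols_dim[of "circulant r c"] unfolding circulant_def by simp

lemma D_int: "i < r \<Longrightarrow> int ((j + r - i) mod r) = (int j - int i) mod int r"
proof -
  assume "i < r"
  have "int ((j + r - i) mod r) = int (j + r - i) mod int r" by (simp add: zmod_int)
  also have "int (j + r - i) = (int j - int i) + int r" using \<open>i < r\<close> by simp
  finally show ?thesis by simp
qed

lemma bitsum: fixes t i X P :: int
  assumes "0 \<le> X" "0 \<le> P"
  shows "(if t \<le> i \<and> i < t + X + P then 1 else 0 :: bit) =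
    (if t \<le> i \<and> i < t + X then 1 else 0) + (if t + X \<le> i \<and> i < t + X + P then 1 else 0)"
  using assms by auto

locale circ_setup =
  fixes p q r :: nat
  assumes p1: "p > 1" and q1: "q > 1" and rpq: "r = p * q"
begin

interpretation V: vec_space "TYPE(bit)" r .

lemma p_le_r: "p < r" using p1 q1 rpq by simp
lemma r_pos: "r > 0" using p_le_r by simp

definition E :: "int \<Rightarrow> bit vec" where
  "E s = vec r (\<lambda>i. if int i mod int p = s mod int p then 1 else 0)"

lemma E_carrier: "E s \<in> carrier_vec r" unfolding E_def by simp

lemma E_mod: "E (s mod int p) = E s" unfolding E_def by simp

definition S1 where "S1 = E ` {0..<int p}"

lemma E_at: "0 \<le> s \<Longrightarrow> s < int p \<Longrightarrow> 0 \<le> s' \<Longrightarrow> s' < int p \<Longrightarrow>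
   E s' $ nat s = (if s' = s then 1 else 0)"
  unfolding E_def using p_le_r by auto

lemma E_inj: "inj_on E {0..<int p}"
proof
  fix s s' assume a: "s \<in> {0..<int p}" "s' \<in> {0..<int p}" "E s = E s'"
  have "E s $ nat s = 1" using E_at[of s s] a by simp
  hence "E s' $ nat s = 1" using a by simp
  moreover have "E s' $ nat s = (if s' = s then 1 else 0)" using a by (intro E_at) auto
  ultimately show "s = s'" by (auto split: if_splits)
qed

lemma card_S1: "card S1 = p" unfolding S1_def using card_image[OF E_inj] by simp

lemma S1_carrier: "S1 \<subseteq> carrier_vec r" unfolding S1_def using E_carrier by auto

lemma S1_indpt: "V.lin_indpt S1"
proof (rule V.finite_lin_indpt2)
  show "finite S1" unfolding S1_def by simp
  show "S1 \<subseteq> carrier_vec r" using S1_carrier by simp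
  fix a assume "True" and lc: "V.lincomb a S1 = 0\<^sub>v r"
  show "\<forall>v\<in>S1. a v = 0"
  proof
    fix v assume v: "v \<in> S1"
    then obtain s where s: "0 \<le> s" "s < int p" "v = E s" unfolding S1_def by auto
    have ns: "nat s < r" using s p_le_r by simp
    have "0 = V.lincomb a S1 $ nat s" using lc ns by simp
    also have "\<dots> = (\<Sum>x\<in>S1. a x * x $ nat s)"
      by (rule V.lincomb_index[OF ns S1_carrier])
    also have "\<dots> = a v * v $ nat s + (\<Sum>x\<in>S1 - {v}. a x * x $ nat s)"
      using v by (intro sum.remove) (simp_all add: S1_def)
    also have "(\<Sum>x\<in>S1 - {v}. a x * x $ nat s) = 0"
    proof (rule sum.neutral, rule ballI)
      fix x assume x: "x \<in> S1 - {v}"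
      then obtain s' where s': "0 \<le> s'" "s' < int p" "x = E s'"
        unfolding S1_def by auto
      have "s' \<noteq> s" using x s s' by auto
      thus "a x * x $ nat s = 0" using E_at[of s s'] s s' by simp
    qed
    also have "v $ nat s = 1" using E_at[of s s] s by simp
    finally show "a v = 0" by simp
  qed
qed

lemma part1:
  assumes hc: "\<forall>j<r. c j = (if \<exists>i<q. int j = (k + int p * int i) mod int r then 1 else 0)"
  shows "rank2 r (circulant r c) = p"
proof -
  let ?M = "circulant r c"
  have colE: "col ?M j = E (int j - k)" if j: "j < r" for j
  proof (rule eq_vecI)
    show "dim_vec (col ?M j) = dim_vec (E (int j - k))" unfolding E_def circulant_def by simp
    fix i assume "i < dim_vec (E (int j - k))"
    hence i: "i < r" unfolding E_def by simp
    have Dr: "(j + r - i) mod r < r" using r_pos by simp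
    have "col ?M j $ i = c ((j + r - i) mod r)" using col_circ[OF i j] .
    also have "\<dots> = (if \<exists>t<q. (int j - int i) mod (int p * int q) = (k + int p * int t) mod (int p * int q)
                      then 1 else 0)"
      using hc Dr D_int[OF i, of j] rpq by simp
    also have "\<dots> = E (int j - k) $ i"
      using arith1[where i="int i" and j="int j" and k=k and p=p and q=q] p1 q1 i unfolding E_def by simp
    finally show "col ?M j $ i = E (int j - k) $ i" .
  qed
  have sub2: "set (cols ?M) \<subseteq> V.span S1"
  proof
    fix v assume "v \<in> set (cols ?M)"
    then obtain j where j: "j < r" "v = col ?M j" unfolding set_cols_circ by auto
    have "v = E ((int j - k) mod int p)" using colE j E_mod by simp
    moreover have "(int j - k) mod int p \<in> {0..<int p}" using p1 by simp
    ultimately have "v \<in> S1" unfolding S1_def by blast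
    thus "v \<in> V.span S1" using V.span_mem S1_carrier by simp
  qed
  have sub1: "S1 \<subseteq> V.span (set (cols ?M))"
  proof
    fix v assume "v \<in> S1"
    then obtain s where s: "v = E s" unfolding S1_def by auto
    define j where "j = nat ((s + k) mod int r)"
    have j: "j < r" "int j = (s + k) mod int r" using r_pos unfolding j_def
      by (simp_all add: nat_less_iff)
    have "int j mod int r = (s + k) mod int r" using j(2) by simp
    hence "int r dvd int j - (s + k)" by (simp only: mod_eq_dvd_iff)
    moreover have "int j - (s + k) = (int j - k) - s" by simp
    ultimately have "int r dvd (int j - k) - s" by simp
    moreover have "int p dvd int r" using rpq by simp
    ultimately have "int p dvd (int j - k) - s" by (rule dvd_trans[rotated])
    hence "(int j - k) mod int p = s mod int p" by (simp add: mod_eq_dvd_iff)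
    hence "E (int j - k) = E s" using E_mod[of "int j - k"] E_mod[of s] by simp
    hence "v = col ?M j" using colE[OF j(1)] s by simp
    moreover have "col ?M j \<in> set (cols ?M)" using j unfolding set_cols_circ by simp
    moreover have "set (cols ?M) \<subseteq> carrier_vec r" by (rule cols_circ_carrier)
    ultimately show "v \<in> V.span (set (cols ?M))" using V.span_mem by simp
  qed
  have "V.rank ?M = card S1"
    by (rule V.rank_via_basis[OF circ_carrier S1_carrier _ S1_indpt sub1 sub2]) (simp add: S1_def)
  thus ?thesis unfolding rank2_def card_S1 .
qed

definition W :: "int \<Rightarrow> bit vec" where
  "W a = vec r (\<lambda>i. if (int i - a) mod int r < int p then 1 else 0)"

definition S2 where "S2 = W ` {0..int r - int p}"

definition F :: "int \<Rightarrow> nat \<Rightarrow> bit vec" where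
  "F t n = vec r (\<lambda>i. if t \<le> int i \<and> int i < t + int n * int p then 1 else 0)"

lemma W_dim[simp]: "dim_vec (W a) = r" unfolding W_def by simp
lemma F_dim[simp]: "dim_vec (F t n) = r" unfolding F_def by simp

lemma W_carrier: "W a \<in> carrier_vec r" unfolding W_def by simp

lemma S2_carrier: "S2 \<subseteq> carrier_vec r" unfolding S2_def using W_carrier by auto

lemma W_mod: "W (a mod int r) = W a"
  unfolding W_def by (simp add: mod_diff_right_eq)

lemma W_nonwrap:
  assumes "0 \<le> a" "a + int p \<le> int r" "i < r"
  shows "W a $ i = (if a \<le> int i \<and> int i < a + int p then 1 else 0)"
proof -
  have m: "(int i - a) mod int r = (if int i - a < 0 then int i - a + int r else int i - a)"
    using assms r_pos by (intro mod_win) auto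
  show ?thesis unfolding W_def using assms m by auto
qed

lemma W_inj: "inj_on W {0..int r - int p}"
proof
  fix b b' assume b: "b \<in> {0..int r - int p}" and b': "b' \<in> {0..int r - int p}" and eq: "W b = W b'"
  have nb: "nat b < r" "nat b' < r" using b b' p1 by auto
  have "W b $ nat b = 1" using W_nonwrap[of b "nat b"] b nb p1 by simp
  hence "W b' $ nat b = 1" using eq by simp
  hence "b' \<le> b" using W_nonwrap[of b' "nat b"] b b' nb by (auto split: if_splits)
  moreover have "W b' $ nat b' = 1" using W_nonwrap[of b' "nat b'"] b' nb p1 by simp
  hence "W b $ nat b' = 1" using eq by simp
  hence "b \<le> b'" using W_nonwrap[of b "nat b'"] b b' nb by (auto split: if_splits)
  ultimately show "b = b'" by simp
qed

lemma card_S2: "card S2 = r - p + 1"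
proof -
  have "card S2 = card {0..int r - int p}" unfolding S2_def using card_image[OF W_inj] .
  also have "\<dots> = nat (int r - int p + 1)" by simp
  also have "\<dots> = r - p + 1" using p_le_r by simp
  finally show ?thesis .
qed

lemma S2_indpt: "V.lin_indpt S2"
proof (rule V.finite_lin_indpt2)
  show "finite S2" unfolding S2_def by simp
  show "S2 \<subseteq> carrier_vec r" using S2_carrier by simp
  fix a assume "True" and lc: "V.lincomb a S2 = 0\<^sub>v r"
  show "\<forall>v\<in>S2. a v = 0"
  proof (rule ccontr)
    assume "\<not> (\<forall>v\<in>S2. a v = 0)"
    define B where "B = {b \<in> {0..int r - int p}. a (W b) \<noteq> 0}"
    have "B \<noteq> {}" using \<open>\<not> (\<forall>v\<in>S2. a v = 0)\<close> unfolding B_def S2_def by auto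
    moreover have "finite B" by (rule finite_subset[where B="{0..int r - int p}"]) (auto simp: B_def)
    ultimately have bB: "Min B \<in> B" and bmin: "\<And>b'. b' \<in> B \<Longrightarrow> Min B \<le> b'" by auto
    define b where "b = Min B"
    have b: "0 \<le> b" "b \<le> int r - int p" "a (W b) \<noteq> 0" using bB unfolding b_def B_def by auto
    have nb: "nat b < r" using b p1 by auto
    let ?v = "W b"
    have v: "?v \<in> S2" using b unfolding S2_def by auto
    have "0 = V.lincomb a S2 $ nat b" using lc nb by simp
    also have "\<dots> = (\<Sum>x\<in>S2. a x * x $ nat b)"
      by (rule V.lincomb_index[OF nb S2_carrier])
    also have "\<dots> = a ?v * ?v $ nat b + (\<Sum>x\<in>S2 - {?v}. a x * x $ nat b)"
      using v by (intro sum.remove) (simp_all add: S2_def)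
    also have "(\<Sum>x\<in>S2 - {?v}. a x * x $ nat b) = 0"
    proof (rule sum.neutral, rule ballI)
      fix x assume x: "x \<in> S2 - {?v}"
      then obtain b' where b': "0 \<le> b'" "b' \<le> int r - int p" "x = W b'"
        unfolding S2_def by auto
      have "b' \<noteq> b" using x b' by auto
      show "a x * x $ nat b = 0"
      proof (cases "b' < b")
        case True
        hence "b' \<notin> B" using bmin[of b'] unfolding b_def by auto
        hence "a x = 0" using b' unfolding B_def by auto
        thus ?thesis by simp
      next
        case False
        hence "b < b'" using \<open>b' \<noteq> b\<close> by simp
        hence "x $ nat b = 0" using W_nonwrap[of b' "nat b"] b' b nb by simp
        thus ?thesis by simp
      qed
    qed
    also have "?v $ nat b = 1" using W_nonwrap[of b "nat b"] b nb p1 by simp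
    finally show False using b(3) by simp
  qed
qed

lemma F_span: "0 \<le> t \<Longrightarrow> t + int n * int p \<le> int r \<Longrightarrow> F t n \<in> V.span S2"
proof (induction n)
  case 0
  have "F t 0 = 0\<^sub>v r" unfolding F_def by (intro eq_vecI) auto
  thus ?case using V.span_zero_mem[OF S2_carrier] by (simp only:)
next
  case (Suc n)
  have le: "t + int n * int p \<le> int r" using Suc.prems by (simp add: distrib_right)
  have "t + int n * int p \<in> {0..int r - int p}" using Suc.prems
    by (simp add: distrib_right)
  hence wS: "W (t + int n * int p) \<in> S2" unfolding S2_def by (rule imageI)
  have eq: "F t (Suc n) = F t n + W (t + int n * int p)"
  proof (rule eq_vecI)
    fix i assume "i < dim_vec (F t n + W (t + int n * int p))"
    hence i: "i < r" unfolding F_def W_def by simp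
    have w: "W (t + int n * int p) $ i =
      (if t + int n * int p \<le> int i \<and> int i < t + int n * int p + int p then 1 else 0)"
    proof -
      have a0: "0 \<le> t + int n * int p" using Suc.prems by simp
      have a1: "t + int n * int p + int p \<le> int r" using Suc.prems by (simp add: distrib_right)
      show ?thesis using W_nonwrap[OF a0 a1 i] .
    qed
    show "F t (Suc n) $ i = (F t n + W (t + int n * int p)) $ i"
    proof -
      have np: "0 \<le> int n * int p" by simp
      have "F t (Suc n) $ i = (if t \<le> int i \<and> int i < t + int n * int p + int p then 1 else 0)"
        using i unfolding F_def by (simp add: distrib_right)
      moreover have "F t n $ i = (if t \<le> int i \<and> int i < t + int n * int p then 1 else 0)"
        using i unfolding F_def by simp
      ultimately show ?thesis using i w bitsum[OF np, of p t "int i"] by simp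
    qed
  qed (simp add: F_def W_def)
  show ?case unfolding eq
    by (rule V.span_add1[OF S2_carrier Suc.IH[OF Suc.prems(1) le] V.span_mem[OF S2_carrier wS]])
qed

lemma W_span: "W a \<in> V.span S2"
proof -
  define b where "b = a mod int r"
  have b: "0 \<le> b" "b < int r" using r_pos unfolding b_def by auto
  have Wa: "W a = W b" unfolding b_def W_mod ..
  show ?thesis
  proof (cases "b \<le> int r - int p")
    case True
    hence "W b \<in> S2" using b unfolding S2_def by auto
    thus ?thesis unfolding Wa using V.span_mem[OF S2_carrier] by simp
  next
    case False
    define t where "t = b - (int r - int p)"
    have t: "1 \<le> t" "t < int p" using False b unfolding t_def by auto
    have qp: "int (q - 1) * int p = int r - int p" using q1 rpq by (simp add: of_nat_diff algebra_simps)
    have "F t (q - 1) \<in> V.span S2" using t qp b unfolding t_def by (intro F_span) auto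
    moreover have "F 0 q \<in> V.span S2" using rpq by (intro F_span) (auto simp: mult.commute)
    ultimately have sp: "F t (q - 1) + F 0 q \<in> V.span S2"
      by (rule V.span_add1[OF S2_carrier])
    have "W b = F t (q - 1) + F 0 q"
    proof (rule eq_vecI)
      fix i assume "i < dim_vec (F t (q - 1) + F 0 q)"
      hence i: "i < r" unfolding F_def W_def by simp
      have m: "(int i - b) mod int r = (if int i - b < 0 then int i - b + int r else int i - b)"
        using b i r_pos by (intro mod_win) auto
      have r': "int q * int p = int r" using rpq by simp
      show "W b $ i = (F t (q - 1) + F 0 q) $ i"
        using i m t qp r' unfolding W_def F_def t_def by auto
    qed (simp add: F_def W_def)
    thus ?thesis unfolding Wa using sp by simp
  qed
qed

lemma part2:
  assumes hc: "\<forall>j<r. c j = (if \<exists>i<p. int j = (k + int i) mod int r then 1 else 0)"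
  shows "rank2 r (circulant r c) = r - p + 1"
proof -
  let ?M = "circulant r c"
  have colW: "col ?M j = W (int j - k - int p + 1)" if j: "j < r" for j
  proof (rule eq_vecI)
    show "dim_vec (col ?M j) = dim_vec (W (int j - k - int p + 1))" unfolding W_def circulant_def by simp
    fix i assume "i < dim_vec (W (int j - k - int p + 1))"
    hence i: "i < r" unfolding W_def by simp
    have Dr: "(j + r - i) mod r < r" using r_pos by simp
    have "col ?M j $ i = c ((j + r - i) mod r)" using col_circ[OF i j] .
    also have "\<dots> = (if \<exists>t<p. (int j - int i) mod int r = (k + int t) mod int r then 1 else 0)"
      using hc Dr D_int[OF i, of j] by simp
    also have "\<dots> = W (int j - k - int p + 1) $ i"
      using arith2[where i="int i" and j="int j" and k=k and p=p and r=r] p1 p_le_r i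
      unfolding W_def by simp
    finally show "col ?M j $ i = W (int j - k - int p + 1) $ i" .
  qed
  have sub2: "set (cols ?M) \<subseteq> V.span S2"
  proof
    fix v assume "v \<in> set (cols ?M)"
    then obtain j where j: "j < r" "v = col ?M j" unfolding set_cols_circ by auto
    thus "v \<in> V.span S2" using colW W_span by simp
  qed
  have sub1: "S2 \<subseteq> V.span (set (cols ?M))"
  proof
    fix v assume "v \<in> S2"
    then obtain s where s: "v = W s" unfolding S2_def by auto
    define j where "j = nat ((s + k + int p - 1) mod int r)"
    have j: "j < r" "int j = (s + k + int p - 1) mod int r" using r_pos unfolding j_def
      by (simp_all add: nat_less_iff)
    have "int j mod int r = (s + k + int p - 1) mod int r" using j(2) by simp
    hence "int r dvd int j - (s + k + int p - 1)" by (simp only: mod_eq_dvd_iff)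
    moreover have "int j - (s + k + int p - 1) = (int j - k - int p + 1) - s" by simp
    ultimately have "int r dvd (int j - k - int p + 1) - s" by simp
    hence "(int j - k - int p + 1) mod int r = s mod int r" by (simp only: mod_eq_dvd_iff)
    hence "W (int j - k - int p + 1) = W s"
      using W_mod[of "int j - k - int p + 1"] W_mod[of s] by simp
    hence "v = col ?M j" using colW[OF j(1)] s by simp
    moreover have "col ?M j \<in> set (cols ?M)" using j unfolding set_cols_circ by simp
    moreover have "set (cols ?M) \<subseteq> carrier_vec r" by (rule cols_circ_carrier)
    ultimately show "v \<in> V.span (set (cols ?M))" using V.span_mem by simp
  qed
  have "V.rank ?M = card S2"
    by (rule V.rank_via_basis[OF circ_carrier S2_carrier _ S2_indpt sub1 sub2]) (simp add: S2_def)
  thus ?thesis unfolding rank2_def card_S2 .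
qed

end

theorem theorem3:
  fixes p q r :: nat and k :: int and c :: "nat \<Rightarrow> bit"
  assumes "p > 1" and "q > 1" and "r = p * q"
  shows "((\<forall>j<r. c j = (if \<exists>i<q. int j = (k + int p * int i) mod int r then 1 else 0))
            \<longrightarrow> rank2 r (circulant r c) = p)
       \<and> ((\<forall>j<r. c j = (if \<exists>i<p. int j = (k + int i) mod int r then 1 else 0))
            \<longrightarrow> rank2 r (circulant r c) = r - p + 1)"
proof -
  interpret CS: circ_setup p q r using assms by unfold_locales
  show ?thesis using CS.part1[of c k] CS.part2[of c k] by blast
qed

end
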